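(* Let $J\subset \mathbb{C}[x_1,y_1,\dots,x_n,y_n]$ be the vanishing ideal of an $\mathfrak S_n$-cluster on $(\mathbb{A}^2)^n$, i.e.\ an $\mathfrak S_n$-invariant ideal such that $\mathbb{C}[x_1,y_1,\dots,x_n,y_n]/J$ is isomorphic as an $\mathfrak S_n$-representation to the regular representation $\mathbb{C}[\mathfrak S_n]$, where $\mathfrak S_n$ acts by permuting the index of the pairs $(x_i,y_i)$. Then for every $1\le k\le n$ the inclusion $\mathbb{C}[x_1,y_1,\dots,x_k,y_k]\hookrightarrow \mathbb{C}[x_1,y_1,\dots,x_n,y_n]$ induces an isomorphism \[\mathbb{C}[x_1,y_1,\dots,x_k,y_k]/\bigl(J\cap \mathbb{C}[x_1,y_1,\dots,x_k,y_k]\bigr)\xrightarrow{\ \cong\ } \bigl(\mathbb{C}[x_1,y_1,\dots,x_n,y_n]/J\bigr)^{\mathfrak S_{n-k}},\] where $\mathfrak S_{n-k}$ is the subgroup of $\mathfrak S_n$ permuting the indices $k+1,\dots,n$. *)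

theory Defs
  imports Complex_Main "HOL-Library.Poly_Mapping" "HOL-Combinatorics.Permutations"
begin

text \<open>Polynomials in the variables x_i = (i, False), y_i = (i, True), i \<ge> 1,
  with complex coefficients: a finitely supported map from monomials
  (finitely supported exponent vectors) to coefficients.\<close>
type_synonym var = "nat \<times> bool"
type_synonym cpoly = "(var \<Rightarrow>\<^sub>0 nat) \<Rightarrow>\<^sub>0 complex"

definition polyring :: "nat \<Rightarrow> cpoly set" where
  "polyring k = {f. \<forall>m \<in> Poly_Mapping.keys f. \<forall>v \<in> Poly_Mapping.keys m. fst v \<in> {1..k}}"

definition cscale :: "complex \<Rightarrow> cpoly \<Rightarrow> cpoly" where
  "cscale c f = Poly_Mapping.map (\<lambda>a. c * a) f"

text \<open>Action of a permutation sigma of the indices: x_i \<mapsto> x_(sigma i), y_i \<mapsto> y_(sigma i).\<close>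
definition vshift :: "(nat \<Rightarrow> nat) \<Rightarrow> var \<Rightarrow> var" where
  "vshift \<sigma> v = (\<sigma> (fst v), snd v)"

definition pact :: "(nat \<Rightarrow> nat) \<Rightarrow> cpoly \<Rightarrow> cpoly" where
  "pact \<sigma> f = Poly_Mapping.map_key (\<lambda>m. Poly_Mapping.map_key (vshift \<sigma>) m) f"

definition is_ideal_in :: "cpoly set \<Rightarrow> cpoly set \<Rightarrow> bool" where
  "is_ideal_in R J \<longleftrightarrow> J \<subseteq> R \<and> 0 \<in> J \<and> (\<forall>a\<in>J. \<forall>b\<in>J. a + b \<in> J)
      \<and> (\<forall>r\<in>R. \<forall>a\<in>J. r * a \<in> J)"

text \<open>The regular representation C[S_n]: complex functions on the permutations of {1..n}
  (zero elsewhere), with left action (sigma g)(tau) = g(sigma^-1 tau).\<close>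
definition regrep :: "nat \<Rightarrow> ((nat \<Rightarrow> nat) \<Rightarrow> complex) set" where
  "regrep n = {g. \<forall>\<tau>. \<not> \<tau> permutes {1..n} \<longrightarrow> g \<tau> = 0}"

definition regact :: "(nat \<Rightarrow> nat) \<Rightarrow> ((nat \<Rightarrow> nat) \<Rightarrow> complex) \<Rightarrow> ((nat \<Rightarrow> nat) \<Rightarrow> complex)" where
  "regact \<sigma> g = (\<lambda>\<tau>. g (inv \<sigma> \<circ> \<tau>))"

text \<open>The quotient R/J is encoded by a C-linear S_n-equivariant surjection R \<rightarrow> C[S_n] with kernel J.\<close>
definition Sn_cluster_ideal :: "nat \<Rightarrow> cpoly set \<Rightarrow> bool" where
  "Sn_cluster_ideal n J \<longleftrightarrow>
     is_ideal_in (polyring n) J \<and>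
     (\<forall>\<sigma>. \<sigma> permutes {1..n} \<longrightarrow> (\<forall>f\<in>J. pact \<sigma> f \<in> J)) \<and>
     (\<exists>\<phi> :: cpoly \<Rightarrow> (nat \<Rightarrow> nat) \<Rightarrow> complex. (\<forall>f\<in>polyring n. \<forall>g\<in>polyring n. \<phi> (f + g) = (\<lambda>\<tau>. \<phi> f \<tau> + \<phi> g \<tau>)) \<and>
          (\<forall>c. \<forall>f\<in>polyring n. \<phi> (cscale c f) = (\<lambda>\<tau>. c * \<phi> f \<tau>)) \<and>
          \<phi> ` polyring n = regrep n \<and>
          (\<forall>f\<in>polyring n. \<phi> f = (\<lambda>\<tau>. 0) \<longleftrightarrow> f \<in> J) \<and>
          (\<forall>\<sigma> f. \<sigma> permutes {1..n} \<longrightarrow> f \<in> polyring n \<longrightarrow> \<phi> (pact \<sigma> f) = regact \<sigma> (\<phi> f)))"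

definition coset :: "cpoly set \<Rightarrow> cpoly \<Rightarrow> cpoly set" where
  "coset I f = {f + a | a. a \<in> I}"

definition quotient_space :: "cpoly set \<Rightarrow> cpoly set \<Rightarrow> cpoly set set" where
  "quotient_space R I = coset I ` R"

definition invariant_classes :: "nat \<Rightarrow> nat \<Rightarrow> cpoly set \<Rightarrow> cpoly set set" where
  "invariant_classes n k J = {C \<in> quotient_space (polyring n) J.
       \<forall>\<sigma>. \<sigma> permutes {k+1..n} \<longrightarrow> pact \<sigma> ` C = C}"

text \<open>The map R_k/(J \<inter> R_k) \<rightarrow> R_n/J induced by the inclusion: f + (J\<inter>R_k) \<mapsto> f + J.\<close>
definition induced_map :: "cpoly set \<Rightarrow> cpoly set \<Rightarrow> cpoly set" where
  "induced_map J C = {g + a | g a. g \<in> C \<and> a \<in> J}"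

end

theory Submission
  imports Defs
begin

definition K :: "(nat \<Rightarrow> nat) \<Rightarrow> (var \<Rightarrow>\<^sub>0 nat) \<Rightarrow> (var \<Rightarrow>\<^sub>0 nat)" where
  "K \<sigma> m = Poly_Mapping.map_key (vshift \<sigma>) m"

lemma lookup_map_key_gen:
  assumes "inj f"
  shows "Poly_Mapping.lookup (Poly_Mapping.map_key f p) x = Poly_Mapping.lookup p (f x)"
proof -
  have [transfer_rule]: "inj f" by fact
  show ?thesis by transfer simp
qed

lemma inj_vshift: "inj \<sigma> \<Longrightarrow> inj (vshift \<sigma>)"
  by (auto simp: inj_def vshift_def prod_eq_iff)

lemma lookup_K: "inj \<sigma> \<Longrightarrow> Poly_Mapping.lookup (K \<sigma> m) v = Poly_Mapping.lookup m (\<sigma> (fst v), snd v)"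
  by (simp add: K_def lookup_map_key_gen inj_vshift vshift_def)

lemma inj_K: assumes "surj \<sigma>" "inj \<sigma>" shows "inj (K \<sigma>)"
proof (rule injI)
  fix m1 m2 assume e: "K \<sigma> m1 = K \<sigma> m2"
  show "m1 = m2"
  proof (rule poly_mapping_eqI)
    fix v :: var
    obtain i b where v: "v = (i,b)" by (cases v)
    obtain j where "i = \<sigma> j" using assms(1) by (metis surjD)
    then have "Poly_Mapping.lookup m1 v = Poly_Mapping.lookup (K \<sigma> m1) (j,b)"
      "Poly_Mapping.lookup m2 v = Poly_Mapping.lookup (K \<sigma> m2) (j,b)"
      using assms by (simp_all add: lookup_K v)
    then show "Poly_Mapping.lookup m1 v = Poly_Mapping.lookup m2 v" using e by simp
  qed
qed

lemma lookup_pact: "bij \<sigma> \<Longrightarrow> Poly_Mapping.lookup (pact \<sigma> f) m = Poly_Mapping.lookup f (K \<sigma> m)"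
  unfolding pact_def K_def[symmetric]
  by (rule lookup_map_key_gen, rule inj_K) (auto simp: bij_def)

lemma K_comp: "bij \<sigma> \<Longrightarrow> bij \<tau> \<Longrightarrow> K \<tau> (K \<sigma> m) = K (\<sigma> \<circ> \<tau>) m"
  by (rule poly_mapping_eqI) (simp add: lookup_K bij_def inj_compose)

lemma K_id: "K id m = m"
  by (rule poly_mapping_eqI) (simp add: lookup_K)

lemma K_add: "inj \<sigma> \<Longrightarrow> K \<sigma> (a + b) = K \<sigma> a + K \<sigma> b"
  by (rule poly_mapping_eqI) (simp add: lookup_K lookup_add)

lemma K_zero: "inj \<sigma> \<Longrightarrow> K \<sigma> 0 = 0"
  by (rule poly_mapping_eqI) (simp add: lookup_K)

lemma K_single: assumes bj: "bij \<sigma>"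
  shows "K \<sigma> (Poly_Mapping.single (j,b) a) = Poly_Mapping.single (inv \<sigma> j, b) a"
proof (rule poly_mapping_eqI)
  fix v :: var
  obtain i b' where v: "v = (i,b')" by (cases v)
  have e: "(j = \<sigma> i) \<longleftrightarrow> (inv \<sigma> j = i)" using bj by (metis bij_inv_eq_iff)
  show "Poly_Mapping.lookup (K \<sigma> (Poly_Mapping.single (j,b) a)) v = Poly_Mapping.lookup (Poly_Mapping.single (inv \<sigma> j, b) a) v"
    using bj e by (simp add: lookup_K bij_is_inj v lookup_single)
qed

lemma pact_add: "bij \<sigma> \<Longrightarrow> pact \<sigma> (f + g) = pact \<sigma> f + pact \<sigma> g"
  by (rule poly_mapping_eqI) (simp add: lookup_pact lookup_add)

lemma pact_zero: "bij \<sigma> \<Longrightarrow> pact \<sigma> 0 = 0"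
  by (rule poly_mapping_eqI) (simp add: lookup_pact)

lemma pact_uminus: "bij \<sigma> \<Longrightarrow> pact \<sigma> (- f) = - pact \<sigma> f"
  by (rule poly_mapping_eqI) (simp add: lookup_pact)

lemma pact_diff: "bij \<sigma> \<Longrightarrow> pact \<sigma> (f - g) = pact \<sigma> f - pact \<sigma> g"
  by (rule poly_mapping_eqI) (simp add: lookup_pact lookup_minus)

lemma pact_sum: "bij \<sigma> \<Longrightarrow> pact \<sigma> (sum F A) = (\<Sum>x\<in>A. pact \<sigma> (F x))"
  by (rule poly_mapping_eqI) (simp add: lookup_pact lookup_sum)

lemma pact_comp: "bij \<sigma> \<Longrightarrow> bij \<tau> \<Longrightarrow> pact \<sigma> (pact \<tau> f) = pact (\<sigma> \<circ> \<tau>) f"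
  by (rule poly_mapping_eqI) (simp add: lookup_pact K_comp bij_comp)

lemma pact_id: "pact id f = f"
  by (rule poly_mapping_eqI) (simp add: lookup_pact K_id)

lemma K_inv: "bij \<sigma> \<Longrightarrow> K \<sigma> (K (inv \<sigma>) M) = M"
  by (simp add: K_comp bij_imp_bij_inv bij_is_inj K_id)

lemma pact_single: "bij \<sigma> \<Longrightarrow> pact \<sigma> (Poly_Mapping.single M c) = Poly_Mapping.single (K (inv \<sigma>) M) c"
proof (rule poly_mapping_eqI)
  fix m assume b: "bij \<sigma>"
  have eq: "K \<sigma> m = M \<longleftrightarrow> K (inv \<sigma>) M = m"
    using K_inv[OF b, of M] K_inv[OF bij_imp_bij_inv[OF b], of m] b
    by (metis inv_inv_eq)
  show "Poly_Mapping.lookup (pact \<sigma> (Poly_Mapping.single M c)) m =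
      Poly_Mapping.lookup (Poly_Mapping.single (K (inv \<sigma>) M) c) m"
  proof (cases "K \<sigma> m = M")
    case True
    then have "K (inv \<sigma>) M = m" using eq by blast
    then show ?thesis using True by (simp only: lookup_pact[OF b] lookup_single_eq)
  next
    case False
    then have n1: "K (inv \<sigma>) M \<noteq> m" using eq by blast
    have n2: "M \<noteq> K \<sigma> m" using False by blast
    show ?thesis by (simp only: lookup_pact[OF b] lookup_single_not_eq[OF n1] lookup_single_not_eq[OF n2])
  qed
qed


definition cst :: "complex \<Rightarrow> cpoly" where "cst c = Poly_Mapping.single 0 c"

definition monok :: "nat \<Rightarrow> (var \<Rightarrow>\<^sub>0 nat) \<Rightarrow> bool" where
  "monok k M \<longleftrightarrow> (\<forall>v\<in>Poly_Mapping.keys M. fst v \<in> {1..k})"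

lemma polyring_iff: "f \<in> polyring k \<longleftrightarrow> (\<forall>m\<in>Poly_Mapping.keys f. monok k m)"
  by (simp add: polyring_def monok_def)

lemma polyring_mono: assumes "k \<le> n" shows "polyring k \<subseteq> polyring n"
proof
  fix f assume "f \<in> polyring k"
  then have "\<forall>m\<in>Poly_Mapping.keys f. \<forall>v\<in>Poly_Mapping.keys m. fst v \<in> {1..k}" by (simp add: polyring_def)
  then have "\<forall>m\<in>Poly_Mapping.keys f. \<forall>v\<in>Poly_Mapping.keys m. fst v \<in> {1..n}" using assms by force
  then show "f \<in> polyring n" by (simp add: polyring_def)
qed

lemma polyring_zero: "0 \<in> polyring k"
  by (simp add: polyring_def)

lemma polyring_single: "monok k M \<Longrightarrow> Poly_Mapping.single M c \<in> polyring k"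
  by (simp add: polyring_iff)

lemma monok_zero: "monok k 0" by (simp add: monok_def)

lemma polyring_cst: "cst c \<in> polyring k"
  by (simp add: cst_def polyring_single monok_zero)

lemma polyring_add: "f \<in> polyring k \<Longrightarrow> g \<in> polyring k \<Longrightarrow> f + g \<in> polyring k"
proof -
  assume f: "f \<in> polyring k" and g: "g \<in> polyring k"
  show ?thesis unfolding polyring_iff
  proof
    fix m assume "m \<in> Poly_Mapping.keys (f + g)"
    then have "m \<in> Poly_Mapping.keys f \<or> m \<in> Poly_Mapping.keys g" using keys_add[of f g] by (auto)
    then show "monok k m" using f g by (auto simp: polyring_iff)
  qed
qed

lemma polyring_uminus: "f \<in> polyring k \<Longrightarrow> - f \<in> polyring k"
  unfolding polyring_def by simp

lemma polyring_diff: "f \<in> polyring k \<Longrightarrow> g \<in> polyring k \<Longrightarrow> f - g \<in> polyring k"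
  using polyring_add[of f k "-g"] polyring_uminus[of g k] by simp

lemma polyring_sum: "(\<And>x. x \<in> A \<Longrightarrow> F x \<in> polyring k) \<Longrightarrow> sum F A \<in> polyring k"
proof (induction A rule: infinite_finite_induct)
  case (infinite A) then show ?case by (simp add: polyring_zero)
next
  case empty then show ?case by (simp add: polyring_zero)
next
  case (insert x F) then show ?case by (simp add: polyring_add)
qed

lemma monok_add: "monok k a \<Longrightarrow> monok k b \<Longrightarrow> monok k (a + b)"
proof -
  assume a: "monok k a" and b: "monok k b"
  show ?thesis unfolding monok_def
  proof
    fix v assume "v \<in> Poly_Mapping.keys (a + b)"
    then have "v \<in> Poly_Mapping.keys a \<or> v \<in> Poly_Mapping.keys b" using keys_add[of a b] by (auto)
    then show "fst v \<in> {1..k}" using a b by (auto simp: monok_def)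
  qed
qed

lemma polyring_mult: "f \<in> polyring k \<Longrightarrow> g \<in> polyring k \<Longrightarrow> f * g \<in> polyring k"
proof -
  assume f: "f \<in> polyring k" and g: "g \<in> polyring k"
  show ?thesis unfolding polyring_iff
  proof
    fix m assume "m \<in> Poly_Mapping.keys (f * g)"
    then obtain a b where "m = a + b" "a \<in> Poly_Mapping.keys f" "b \<in> Poly_Mapping.keys g"
      using keys_mult[of f g] by (auto)
    then show "monok k m" using f g monok_add by (auto simp: polyring_iff)
  qed
qed

lemma polyring_pact_inv:
  assumes p: "\<sigma> permutes S" and S: "S \<inter> {1..k} = {}" and f: "f \<in> polyring k"
  shows "pact \<sigma> f = f"
proof -
  have bj: "bij \<sigma>" using p by (rule permutes_bij)
  have fix1: "\<sigma> i = i" if "i \<in> {1..k}" for i using that S permutes_not_in[OF p] by blast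
  have A: "K \<sigma> m = m" if "monok k m" for m
  proof (rule poly_mapping_eqI)
    fix v :: var
    obtain i b where v: "v = (i,b)" by (cases v)
    show "Poly_Mapping.lookup (K \<sigma> m) v = Poly_Mapping.lookup m v"
    proof (cases "i \<in> {1..k}")
      case True then show ?thesis using fix1 bj by (simp add: lookup_K bij_is_inj v)
    next
      case False
      have "\<sigma> i \<notin> {1..k}"
      proof
        assume "\<sigma> i \<in> {1..k}"
        then have "\<sigma> (\<sigma> i) = \<sigma> i" by (rule fix1)
        then have "\<sigma> i = i" using bj by (metis bij_is_inj injD)
        then show False using False \<open>\<sigma> i \<in> {1..k}\<close> by simp
      qed
      then have "(\<sigma> i, b) \<notin> Poly_Mapping.keys m" "(i, b) \<notin> Poly_Mapping.keys m"
        using that False by (auto simp: monok_def)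
      then show ?thesis using bj by (simp add: lookup_K bij_is_inj v in_keys_iff)
    qed
  qed
  have B: "K \<sigma> m = m" if "monok k (K \<sigma> m)" for m
  proof (rule poly_mapping_eqI)
    fix v :: var
    obtain i b where v: "v = (i,b)" by (cases v)
    show "Poly_Mapping.lookup (K \<sigma> m) v = Poly_Mapping.lookup m v"
    proof (cases "i \<in> {1..k}")
      case True then show ?thesis using fix1 bj by (simp add: lookup_K bij_is_inj v)
    next
      case False
      define j where "j = inv \<sigma> i"
      have sj: "\<sigma> j = i" using bj by (simp add: j_def bij_is_surj surj_f_inv_f)
      have "j \<notin> {1..k}" using fix1 sj False by force
      then have "(j, b) \<notin> Poly_Mapping.keys (K \<sigma> m)" "(i, b) \<notin> Poly_Mapping.keys (K \<sigma> m)"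
        using that False by (auto simp: monok_def)
      then have "Poly_Mapping.lookup (K \<sigma> m) (j,b) = 0" "Poly_Mapping.lookup (K \<sigma> m) (i,b) = 0"
        by (simp_all add: in_keys_iff)
      then show ?thesis using bj sj by (simp add: lookup_K bij_is_inj v)
    qed
  qed
  show ?thesis
  proof (rule poly_mapping_eqI)
    fix m
    show "Poly_Mapping.lookup (pact \<sigma> f) m = Poly_Mapping.lookup f m"
    proof (cases "Poly_Mapping.lookup f (K \<sigma> m) = 0 \<and> Poly_Mapping.lookup f m = 0")
      case True then show ?thesis using bj by (simp add: lookup_pact)
    next
      case False
      then have "monok k (K \<sigma> m) \<or> monok k m" using f by (auto simp: polyring_iff in_keys_iff)
      then have "K \<sigma> m = m" using A B by blast
      then show ?thesis using bj by (simp add: lookup_pact)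
    qed
  qed
qed


lemma J_sub: "is_ideal_in R J \<Longrightarrow> a \<in> J \<Longrightarrow> a \<in> R" by (auto simp: is_ideal_in_def)
lemma J_zero: "is_ideal_in R J \<Longrightarrow> 0 \<in> J" by (auto simp: is_ideal_in_def)
lemma J_add: "is_ideal_in R J \<Longrightarrow> a \<in> J \<Longrightarrow> b \<in> J \<Longrightarrow> a + b \<in> J" by (auto simp: is_ideal_in_def)
lemma J_mult: "is_ideal_in R J \<Longrightarrow> r \<in> R \<Longrightarrow> a \<in> J \<Longrightarrow> r * a \<in> J" by (auto simp: is_ideal_in_def)

lemma cst_minus_one: "cst (-1) = -1"
  by (simp add: cst_def single_uminus)

lemma J_uminus: assumes "is_ideal_in (polyring n) J" "a \<in> J" shows "- a \<in> J"
proof -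
  have "cst (-1) * a \<in> J" using J_mult[OF assms(1) polyring_cst assms(2)] .
  then show ?thesis by (simp add: cst_minus_one)
qed

lemma J_diff: assumes "is_ideal_in (polyring n) J" "a \<in> J" "b \<in> J" shows "a - b \<in> J"
  using J_add[OF assms(1) assms(2) J_uminus[OF assms(1) assms(3)]] by simp

lemma J_sum: assumes "is_ideal_in R J" shows "(\<And>x. x \<in> A \<Longrightarrow> F x \<in> J) \<Longrightarrow> sum F A \<in> J"
proof (induction A rule: infinite_finite_induct)
  case (infinite A) then show ?case using J_zero[OF assms] by simp
next
  case empty then show ?case using J_zero[OF assms] by simp
next
  case (insert x F) then show ?case using J_add[OF assms] by simp
qed

lemma pact_cst: "bij \<sigma> \<Longrightarrow> pact \<sigma> (cst c) = cst c"
  by (simp add: cst_def pact_single K_zero bij_imp_bij_inv bij_is_inj)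

lemma cscale_cst: "cscale c (cst 1) = cst c"
  by (simp add: cscale_def cst_def map_single del: single_one)

lemma cst_add: "cst (a + b) = cst a + cst b" by (simp add: cst_def single_add)

lemma cluster_invariants:
  assumes cl: "Sn_cluster_ideal n J" and f: "f \<in> polyring n"
    and inv: "\<And>\<sigma>. \<sigma> permutes {1..n} \<Longrightarrow> pact \<sigma> f = f"
  shows "\<exists>d. f - cst d \<in> J"
proof -
  have id: "is_ideal_in (polyring n) J" using cl by (simp add: Sn_cluster_ideal_def)
  obtain \<phi> :: "cpoly \<Rightarrow> (nat \<Rightarrow> nat) \<Rightarrow> complex" where
    add: "\<forall>f\<in>polyring n. \<forall>g\<in>polyring n. \<phi> (f + g) = (\<lambda>\<tau>. \<phi> f \<tau> + \<phi> g \<tau>)" and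
    sc: "\<forall>c. \<forall>f\<in>polyring n. \<phi> (cscale c f) = (\<lambda>\<tau>. c * \<phi> f \<tau>)" and
    im: "\<phi> ` polyring n = regrep n" and
    ker: "\<forall>f\<in>polyring n. \<phi> f = (\<lambda>\<tau>. 0) \<longleftrightarrow> f \<in> J" and
    eqv: "\<forall>\<sigma> f. \<sigma> permutes {1..n} \<longrightarrow> f \<in> polyring n \<longrightarrow> \<phi> (pact \<sigma> f) = regact \<sigma> (\<phi> f)"
    using cl unfolding Sn_cluster_ideal_def
    apply (elim conjE exE)
    apply (rule that)
        apply assumption+
    done
  have const: "\<phi> g = (\<lambda>\<tau>. if \<tau> permutes {1..n} then \<phi> g id else 0)"
    if g: "g \<in> polyring n" and ginv: "\<And>\<sigma>. \<sigma> permutes {1..n} \<Longrightarrow> pact \<sigma> g = g" for g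
  proof
    fix \<tau>
    show "\<phi> g \<tau> = (if \<tau> permutes {1..n} then \<phi> g id else 0)"
    proof (cases "\<tau> permutes {1..n}")
      case True
      have e1: "\<phi> (pact \<tau> g) = regact \<tau> (\<phi> g)" by (rule eqv[rule_format, OF True g])
      have e2: "\<phi> g = \<phi> (pact \<tau> g)" by (simp only: ginv[OF True])
      have e3: "\<phi> g = regact \<tau> (\<phi> g)" using e2 e1 by (rule trans)
      have "\<phi> g \<tau> = regact \<tau> (\<phi> g) \<tau>" using e3 by (rule fun_cong)
      then have "\<phi> g \<tau> = \<phi> g (inv \<tau> \<circ> \<tau>)" by (simp only: regact_def)
      then show ?thesis using True by (simp add: permutes_inv_o)
    next
      case False
      have "\<phi> g \<in> regrep n" using im g by blast
      then show ?thesis using False by (simp add: regrep_def)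
    qed
  qed
  have one_in: "cst 1 \<in> polyring n" by (rule polyring_cst)
  have c1: "\<phi> (cst 1) = (\<lambda>\<tau>. if \<tau> permutes {1..n} then \<phi> (cst 1) id else 0)"
    by (rule const[OF one_in]) (simp add: pact_cst permutes_bij)
  have cf: "\<phi> f = (\<lambda>\<tau>. if \<tau> permutes {1..n} then \<phi> f id else 0)"
    by (rule const[OF f inv])
  have nz: "\<phi> (cst 1) id \<noteq> 0"
  proof
    assume z: "\<phi> (cst 1) id = 0"
    have "\<phi> (cst 1) = (\<lambda>\<tau>. 0)"
    proof
      fix \<tau> show "\<phi> (cst 1) \<tau> = 0" using fun_cong[OF c1, of \<tau>] z by simp
    qed
    then have "cst 1 \<in> J" by (rule iffD1[OF ker[rule_format, OF one_in]])
    then have allJ: "g \<in> J" if "g \<in> polyring n" for g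
      using J_mult[OF id that \<open>cst 1 \<in> J\<close>] by (simp add: cst_def)
    define e :: "(nat \<Rightarrow> nat) \<Rightarrow> complex" where "e = (\<lambda>\<tau>. if \<tau> = id then 1 else 0)"
    have "e \<in> regrep n" by (auto simp: e_def regrep_def)
    then have "e \<in> \<phi> ` polyring n" by (simp only: im)
    then obtain g where g: "g \<in> polyring n" "\<phi> g = e" by (metis imageE)
    have "g \<in> J" using allJ g(1) .
    then have "\<phi> g = (\<lambda>\<tau>. 0)" by (rule iffD2[OF ker[rule_format, OF g(1)]])
    then have "e = (\<lambda>\<tau>. 0)" using g(2) by simp
    then have "e id = 0" by simp
    then show False by (simp add: e_def)
  qed
  define d where "d = \<phi> f id / \<phi> (cst 1) id"
  have m: "cst (-d) \<in> polyring n" by (rule polyring_cst)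
  have s1: "\<phi> (cscale (-d) (cst 1)) = (\<lambda>\<tau>. (-d) * \<phi> (cst 1) \<tau>)"
    by (rule sc[rule_format, OF one_in])
  have m': "cscale (-d) (cst 1) \<in> polyring n" by (simp only: cscale_cst polyring_cst)
  have "\<phi> (f + cscale (-d) (cst 1)) = (\<lambda>\<tau>. \<phi> f \<tau> + \<phi> (cscale (-d) (cst 1)) \<tau>)"
    by (rule add[rule_format, OF f m'])
  also have "\<dots> = (\<lambda>\<tau>. \<phi> f \<tau> + (-d) * \<phi> (cst 1) \<tau>)" by (simp only: s1)
  also have "\<dots> = (\<lambda>\<tau>. 0)"
  proof
    fix \<tau>
    show "\<phi> f \<tau> + (-d) * \<phi> (cst 1) \<tau> = 0"
      using nz by (subst cf, subst c1) (simp add: d_def)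
  qed
  finally have "\<phi> (f + cscale (-d) (cst 1)) = (\<lambda>\<tau>. 0)" .
  moreover have "f + cscale (-d) (cst 1) \<in> polyring n" using f m' by (rule polyring_add)
  ultimately have "f + cscale (-d) (cst 1) \<in> J" using ker by blast
  then have "f + cst (-d) \<in> J" by (simp only: cscale_cst)
  then have "f - cst d \<in> J" by (simp add: cst_def single_uminus)
  then show ?thesis by blast
qed


definition xyexp :: "nat \<Rightarrow> nat \<Rightarrow> nat \<Rightarrow> (var \<Rightarrow>\<^sub>0 nat)" where
  "xyexp j a b = Poly_Mapping.single (j,False) a + Poly_Mapping.single (j,True) b"

definition xy :: "nat \<Rightarrow> nat \<Rightarrow> nat \<Rightarrow> cpoly" where
  "xy j a b = Poly_Mapping.single (xyexp j a b) 1"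

lemma monok_xyexp: "j \<in> {1..k} \<Longrightarrow> monok k (xyexp j a b)"
proof -
  assume j: "j \<in> {1..k}"
  have "Poly_Mapping.keys (xyexp j a b) \<subseteq> {(j,False),(j,True)}"
  proof -
    have "Poly_Mapping.keys (xyexp j a b) \<subseteq> Poly_Mapping.keys (Poly_Mapping.single (j,False) a) \<union> Poly_Mapping.keys (Poly_Mapping.single (j,True) b)"
      unfolding xyexp_def by (rule keys_add)
    also have "\<dots> \<subseteq> {(j,False),(j,True)}" by auto
    finally show ?thesis .
  qed
  then show ?thesis using j by (auto simp: monok_def)
qed

lemma xy_in: "j \<in> {1..k} \<Longrightarrow> xy j a b \<in> polyring k"
  unfolding xy_def by (rule polyring_single, rule monok_xyexp)

lemma K_xyexp: "bij \<sigma> \<Longrightarrow> K \<sigma> (xyexp j a b) = xyexp (inv \<sigma> j) a b"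
  by (simp add: xyexp_def K_add bij_is_inj K_single)

lemma pact_xy: "bij \<sigma> \<Longrightarrow> pact \<sigma> (xy j a b) = xy (\<sigma> j) a b"
  by (simp add: xy_def pact_single K_xyexp bij_imp_bij_inv inv_inv_eq)

definition psum :: "nat \<Rightarrow> nat \<Rightarrow> nat \<Rightarrow> cpoly" where
  "psum n a b = (\<Sum>j\<in>{1..n}. xy j a b)"

lemma psum_in: "psum n a b \<in> polyring n"
  unfolding psum_def by (rule polyring_sum, rule xy_in)

lemma psum_inv: assumes p: "\<sigma> permutes {1..n}" shows "pact \<sigma> (psum n a b) = psum n a b"
proof -
  have bj: "bij \<sigma>" using p by (rule permutes_bij)
  have "pact \<sigma> (psum n a b) = (\<Sum>j\<in>{1..n}. xy (\<sigma> j) a b)"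
    unfolding psum_def by (simp add: pact_sum[OF bj] pact_xy[OF bj])
  also have "\<dots> = (\<Sum>j\<in>{1..n}. xy j a b)"
    by (rule sum.reindex_bij_betw, rule permutes_imp_bij[OF p])
  finally show ?thesis by (simp add: psum_def)
qed

lemma psum_const: assumes "Sn_cluster_ideal n J" shows "\<exists>d. psum n a b - cst d \<in> J"
  by (rule cluster_invariants[OF assms psum_in psum_inv])

lemma ex_sum:
  assumes id: "is_ideal_in (polyring n) J" and fin: "finite A"
    and H: "\<And>x. x \<in> A \<Longrightarrow> \<exists>g\<in>polyring k. F x - g \<in> J"
  shows "\<exists>g\<in>polyring k. sum F A - g \<in> J"
  using fin H
proof (induction A rule: finite_induct)
  case empty
  have "sum F {} - 0 \<in> J" using J_zero[OF id] by simp
  then show ?case using polyring_zero by blast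
next
  case (insert x A)
  obtain g1 where g1: "g1 \<in> polyring k" "F x - g1 \<in> J" using insert by blast
  obtain g2 where g2: "g2 \<in> polyring k" "sum F A - g2 \<in> J" using insert by blast
  have "(F x - g1) + (sum F A - g2) \<in> J" using J_add[OF id g1(2) g2(2)] .
  moreover have "(F x - g1) + (sum F A - g2) = sum F (insert x A) - (g1 + g2)"
    using insert by (simp add: algebra_simps)
  ultimately show ?case using polyring_add[OF g1(1) g2(1)] by auto
qed

lemma poly_expand: "h = (\<Sum>M\<in>Poly_Mapping.keys h. Poly_Mapping.single M (Poly_Mapping.lookup h M))"
proof (rule poly_mapping_eqI)
  fix m
  have "Poly_Mapping.lookup (\<Sum>M\<in>Poly_Mapping.keys h. Poly_Mapping.single M (Poly_Mapping.lookup h M)) m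
      = (\<Sum>M\<in>Poly_Mapping.keys h. (if M = m then Poly_Mapping.lookup h M else 0))"
    by (simp add: lookup_sum lookup_single when_def)
  also have "\<dots> = (if m \<in> Poly_Mapping.keys h then Poly_Mapping.lookup h m else 0)"
    by (simp add: sum.delta')
  also have "\<dots> = Poly_Mapping.lookup h m" by (simp add: in_keys_iff)
  finally show "Poly_Mapping.lookup h m = Poly_Mapping.lookup (\<Sum>M\<in>Poly_Mapping.keys h. Poly_Mapping.single M (Poly_Mapping.lookup h M)) m"
    by simp
qed

lemma cst_mult: "cst a * cst b = cst (a * b)" by (simp add: cst_def mult_single)


lemma K_fix_monok:
  assumes p: "\<sigma> permutes S" and S: "S \<inter> {1..k} = {}" and m: "monok k m"
  shows "K (inv \<sigma>) m = m"
proof -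
  have bj: "bij \<sigma>" using p by (rule permutes_bij)
  have "pact \<sigma> (Poly_Mapping.single m (1::complex)) = Poly_Mapping.single m 1"
    by (rule polyring_pact_inv[OF p S polyring_single[OF m]])
  then have e: "Poly_Mapping.single (K (inv \<sigma>) m) (1::complex) = Poly_Mapping.single m 1"
    by (simp only: pact_single[OF bj])
  show ?thesis
  proof (rule ccontr)
    assume ne: "K (inv \<sigma>) m \<noteq> m"
    have "Poly_Mapping.lookup (Poly_Mapping.single (K (inv \<sigma>) m) (1::complex)) m = 0"
      using ne by (rule lookup_single_not_eq)
    then show False using e by simp
  qed
qed

lemma mono_case:
  assumes cl: "Sn_cluster_ideal n J" and kn: "Suc k \<le> n" and M: "monok (Suc k) M"
  shows "\<exists>g\<in>polyring k. (\<Sum>j\<in>{Suc k..n}. pact (Transposition.transpose (Suc k) j) (Poly_Mapping.single M c)) - g \<in> J"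
proof -
  have id: "is_ideal_in (polyring n) J" using cl by (simp add: Sn_cluster_ideal_def)
  define a where "a = Poly_Mapping.lookup M (Suc k, False)"
  define b where "b = Poly_Mapping.lookup M (Suc k, True)"
  define M1 where "M1 = M - Poly_Mapping.single (Suc k, False) a - Poly_Mapping.single (Suc k, True) b"
  have lM1: "Poly_Mapping.lookup M1 v = (if fst v = Suc k then 0 else Poly_Mapping.lookup M v)" for v
    by (cases v) (auto simp: M1_def lookup_minus lookup_single a_def b_def when_def)
  have split: "M = M1 + xyexp (Suc k) a b"
  proof (rule poly_mapping_eqI)
    fix v :: var
    obtain i bb where v: "v = (i,bb)" by (cases v)
    show "Poly_Mapping.lookup M v = Poly_Mapping.lookup (M1 + xyexp (Suc k) a b) v"
      by (cases bb) (auto simp: v lM1 xyexp_def lookup_add lookup_single a_def b_def when_def)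
  qed
  have m1: "monok k M1"
    unfolding monok_def
  proof
    fix v assume v: "v \<in> Poly_Mapping.keys M1"
    then have "fst v \<noteq> Suc k" "v \<in> Poly_Mapping.keys M"
      by (auto simp: in_keys_iff lM1 split: if_splits)
    then show "fst v \<in> {1..k}" using M by (auto simp: monok_def)
  qed
  have tr: "pact (Transposition.transpose (Suc k) j) (Poly_Mapping.single M c)
        = Poly_Mapping.single M1 c * xy j a b" if j: "j \<in> {Suc k..n}" for j
  proof -
    let ?t = "Transposition.transpose (Suc k) j"
    have tp: "?t permutes {Suc k..n}" using j kn by (intro permutes_swap_id) auto
    have bj: "bij ?t" by simp
    have S: "{Suc k..n} \<inter> {1..k} = {}" by auto
    have f1: "K ?t M1 = M1" using K_fix_monok[OF tp S m1] by simp
    have "pact ?t (Poly_Mapping.single M c) = Poly_Mapping.single (K ?t M) c"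
      using pact_single[OF bj] by simp
    also have "K ?t M = M1 + xyexp j a b"
      by (subst split) (simp add: K_add bij_is_inj f1 K_xyexp)
    finally show ?thesis by (simp add: xy_def mult_single)
  qed
  have "(\<Sum>j\<in>{Suc k..n}. pact (Transposition.transpose (Suc k) j) (Poly_Mapping.single M c))
      = (\<Sum>j\<in>{Suc k..n}. Poly_Mapping.single M1 c * xy j a b)"
    by (rule sum.cong) (simp_all add: tr)
  also have "\<dots> = Poly_Mapping.single M1 c * (\<Sum>j\<in>{Suc k..n}. xy j a b)"
    by (simp add: sum_distrib_left)
  finally have T: "(\<Sum>j\<in>{Suc k..n}. pact (Transposition.transpose (Suc k) j) (Poly_Mapping.single M c))
      = Poly_Mapping.single M1 c * (\<Sum>j\<in>{Suc k..n}. xy j a b)" .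
  have un: "{1..n} = {1..k} \<union> {Suc k..n}" using kn by auto
  have ps: "psum n a b = (\<Sum>j\<in>{1..k}. xy j a b) + (\<Sum>j\<in>{Suc k..n}. xy j a b)"
    unfolding psum_def un by (rule sum.union_disjoint) auto
  obtain d where d: "psum n a b - cst d \<in> J" using psum_const[OF cl] by blast
  define g where "g = Poly_Mapping.single M1 c * (cst d - (\<Sum>j\<in>{1..k}. xy j a b))"
  have g_in: "g \<in> polyring k"
    unfolding g_def
    by (intro polyring_mult polyring_single m1 polyring_diff polyring_cst polyring_sum xy_in)
  have s_in: "Poly_Mapping.single M1 c \<in> polyring n"
    using polyring_single[OF m1] polyring_mono[of k n] kn by auto
  have "Poly_Mapping.single M1 c * (psum n a b - cst d) \<in> J"
    by (rule J_mult[OF id s_in d])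
  moreover have "Poly_Mapping.single M1 c * (psum n a b - cst d)
      = Poly_Mapping.single M1 c * (\<Sum>j\<in>{Suc k..n}. xy j a b) - g"
    unfolding g_def ps by (simp add: algebra_simps)
  ultimately show ?thesis using g_in T by auto
qed


lemma step:
  assumes cl: "Sn_cluster_ideal n J" and kn: "Suc k \<le> n" and h: "h \<in> polyring (Suc k)"
    and hinv: "\<And>j. j \<in> {Suc k..n} \<Longrightarrow> pact (Transposition.transpose (Suc k) j) h - h \<in> J"
  shows "\<exists>g\<in>polyring k. h - g \<in> J"
proof -
  have id: "is_ideal_in (polyring n) J" using cl by (simp add: Sn_cluster_ideal_def)
  let ?t = "\<lambda>j. Transposition.transpose (Suc k) j"
  let ?T = "\<lambda>f. \<Sum>j\<in>{Suc k..n}. pact (?t j) f"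
  let ?s = "\<lambda>M. Poly_Mapping.single M (Poly_Mapping.lookup h M)"
  have "?T h = (\<Sum>j\<in>{Suc k..n}. pact (?t j) (\<Sum>M\<in>Poly_Mapping.keys h. ?s M))"
    by (subst poly_expand[of h]) (rule refl)
  also have "\<dots> = (\<Sum>j\<in>{Suc k..n}. \<Sum>M\<in>Poly_Mapping.keys h. pact (?t j) (?s M))"
    by (simp add: pact_sum)
  also have "\<dots> = (\<Sum>M\<in>Poly_Mapping.keys h. ?T (?s M))"
    by (rule sum.swap)
  finally have Th: "?T h = (\<Sum>M\<in>Poly_Mapping.keys h. ?T (?s M))" .
  have "\<exists>g\<in>polyring k. (\<Sum>M\<in>Poly_Mapping.keys h. ?T (?s M)) - g \<in> J"
  proof (rule ex_sum[OF id finite_keys])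
    fix M assume "M \<in> Poly_Mapping.keys h"
    then have "monok (Suc k) M" using h by (simp add: polyring_iff)
    then show "\<exists>g\<in>polyring k. ?T (?s M) - g \<in> J" by (rule mono_case[OF cl kn])
  qed
  then obtain g where g: "g \<in> polyring k" "?T h - g \<in> J" using Th by auto
  have "(\<Sum>j\<in>{Suc k..n}. pact (?t j) h - h) \<in> J"
    by (rule J_sum[OF id], rule hinv)
  then have d1: "?T h - (\<Sum>j\<in>{Suc k..n}. h) \<in> J" by (simp add: sum_subtractf)
  have N: "(\<Sum>j\<in>{Suc k..n}. h) = cst (of_nat (n - k)) * h"
    by (simp add: cst_def)
  have "(?T h - g) - (?T h - (\<Sum>j\<in>{Suc k..n}. h)) \<in> J" by (rule J_diff[OF id g(2) d1])
  then have "cst (of_nat (n - k)) * h - g \<in> J" by (simp add: N cst_def)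
  then have "cst (1 / of_nat (n - k)) * (cst (of_nat (n - k)) * h - g) \<in> J"
    by (rule J_mult[OF id polyring_cst])
  moreover have "cst (1 / of_nat (n - k)) * (cst (of_nat (n - k)) * h - g) = h - cst (1 / of_nat (n - k)) * g"
  proof -
    have nz: "(of_nat (n - k) :: complex) \<noteq> 0" using kn by simp
    have "cst (1 / of_nat (n - k)) * (cst (of_nat (n - k)) * h - g)
        = (cst (1 / of_nat (n - k)) * cst (of_nat (n - k))) * h - cst (1 / of_nat (n - k)) * g"
      by (simp add: algebra_simps)
    also have "cst (1 / of_nat (n - k)) * cst (of_nat (n - k)) = 1"
      using nz by (simp add: cst_mult) (simp add: cst_def)
    finally show ?thesis by simp
  qed
  ultimately have "h - cst (1 / of_nat (n - k)) * g \<in> J" by simp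
  moreover have "cst (1 / of_nat (n - k)) * g \<in> polyring k" by (rule polyring_mult[OF polyring_cst g(1)])
  ultimately show ?thesis by blast
qed

lemma J_pact: assumes cl: "Sn_cluster_ideal n J" and "\<sigma> permutes {1..n}" and "a \<in> J"
  shows "pact \<sigma> a \<in> J"
  using assms by (simp add: Sn_cluster_ideal_def)

lemma down:
  assumes cl: "Sn_cluster_ideal n J" and i: "i \<le> n"
  shows "\<forall>f\<in>polyring n. (\<forall>\<sigma>. \<sigma> permutes {n - i + 1..n} \<longrightarrow> pact \<sigma> f - f \<in> J)
          \<longrightarrow> (\<exists>g\<in>polyring (n - i). f - g \<in> J)"
  using i
proof (induction i)
  case 0
  have id: "is_ideal_in (polyring n) J" using cl by (simp add: Sn_cluster_ideal_def)
  show ?case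
  proof (intro ballI impI)
    fix f assume f: "f \<in> polyring n"
    have "0 \<in> J" using J_zero[OF id] .
    then show "\<exists>g\<in>polyring (n - 0). f - g \<in> J" using f by (intro bexI[of _ f]) auto
  qed
next
  case (Suc i)
  have id: "is_ideal_in (polyring n) J" using cl by (simp add: Sn_cluster_ideal_def)
  define k where "k = n - Suc i"
  have kn: "Suc k \<le> n" and ki: "n - i = Suc k" and ki1: "n - Suc i + 1 = Suc k"
    using Suc.prems by (auto simp: k_def)
  show ?case
  proof (intro ballI impI)
    fix f assume f: "f \<in> polyring n"
      and finv: "\<forall>\<sigma>. \<sigma> permutes {n - Suc i + 1..n} \<longrightarrow> pact \<sigma> f - f \<in> J"
    have finv': "pact \<sigma> f - f \<in> J" if "\<sigma> permutes {Suc k..n}" for \<sigma>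
      using finv that ki1 by simp
    have "\<forall>\<sigma>. \<sigma> permutes {n - i + 1..n} \<longrightarrow> pact \<sigma> f - f \<in> J"
    proof (intro allI impI)
      fix \<sigma> assume "\<sigma> permutes {n - i + 1..n}"
      then have "\<sigma> permutes {Suc k..n}" by (rule permutes_subset) (auto simp: ki)
      then show "pact \<sigma> f - f \<in> J" by (rule finv')
    qed
    then obtain h where h: "h \<in> polyring (Suc k)" "f - h \<in> J"
      using Suc.IH Suc.prems f ki by auto
    have hinv: "pact (Transposition.transpose (Suc k) j) h - h \<in> J" if j: "j \<in> {Suc k..n}" for j
    proof -
      let ?t = "Transposition.transpose (Suc k) j"
      have tp: "?t permutes {Suc k..n}" using j kn by (intro permutes_swap_id) auto
      have tp1: "?t permutes {1..n}" using tp by (rule permutes_subset) auto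
      have bj: "bij ?t" by simp
      have hf: "h - f \<in> J" using J_uminus[OF id h(2)] by simp
      have "pact ?t (h - f) + (pact ?t f - f) + (f - h) \<in> J"
        by (intro J_add[OF id] J_pact[OF cl tp1 hf] finv'[OF tp] h(2))
      moreover have "pact ?t (h - f) + (pact ?t f - f) + (f - h) = pact ?t h - h"
        by (simp add: pact_diff[OF bj])
      ultimately show ?thesis by simp
    qed
    obtain g where g: "g \<in> polyring k" "h - g \<in> J"
      using step[OF cl kn h(1) hinv] by blast
    have "(f - h) + (h - g) \<in> J" by (rule J_add[OF id h(2) g(2)])
    then have "f - g \<in> J" by simp
    then show "\<exists>g\<in>polyring (n - Suc i). f - g \<in> J" using g(1) by (auto simp: k_def)
  qed
qed


lemma coset_eqI:
  assumes add: "\<And>a b. a \<in> I \<Longrightarrow> b \<in> I \<Longrightarrow> a + b \<in> I"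
    and dif: "\<And>a b. a \<in> I \<Longrightarrow> b \<in> I \<Longrightarrow> a - b \<in> I"
    and fg: "f - g \<in> I"
  shows "coset I f = coset I g"
proof
  show "coset I f \<subseteq> coset I g"
  proof
    fix x assume "x \<in> coset I f"
    then obtain a where a: "a \<in> I" "x = f + a" by (auto simp: coset_def)
    have xe: "x = g + ((f - g) + a)" using a by simp
    show "x \<in> coset I g" unfolding coset_def using xe add[OF fg a(1)] by blast
  qed
next
  show "coset I g \<subseteq> coset I f"
  proof
    fix x assume "x \<in> coset I g"
    then obtain a where a: "a \<in> I" "x = g + a" by (auto simp: coset_def)
    have xe: "x = f + (a - (f - g))" using a by simp
    show "x \<in> coset I f" unfolding coset_def using xe dif[OF a(1) fg] by blast
  qed
qed

lemma coset_eqD: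
  assumes z: "0 \<in> I" and e: "coset I f = coset I g"
  shows "f - g \<in> I"
proof -
  have "f \<in> coset I f" using z by (auto simp: coset_def intro!: exI[of _ 0])
  then have "f \<in> coset I g" using e by simp
  then obtain a where "a \<in> I" "f = g + a" by (auto simp: coset_def)
  then show ?thesis by simp
qed

lemma induced_coset:
  assumes id: "is_ideal_in (polyring n) J"
  shows "induced_map J (coset (J \<inter> polyring k) g) = coset J g"
proof
  show "induced_map J (coset (J \<inter> polyring k) g) \<subseteq> coset J g"
  proof
    fix x assume "x \<in> induced_map J (coset (J \<inter> polyring k) g)"
    then obtain y a b where "a \<in> J" "b \<in> J" "y = g + b" "x = y + a"
      by (auto simp: induced_map_def coset_def)
    then have "x = g + (b + a)" "b + a \<in> J" using J_add[OF id] by (auto simp: add.assoc)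
    then show "x \<in> coset J g" by (auto simp: coset_def)
  qed
next
  show "coset J g \<subseteq> induced_map J (coset (J \<inter> polyring k) g)"
  proof
    fix x assume "x \<in> coset J g"
    then obtain a where a: "a \<in> J" "x = g + a" by (auto simp: coset_def)
    have "g \<in> coset (J \<inter> polyring k) g"
      using J_zero[OF id] polyring_zero by (auto simp: coset_def intro!: exI[of _ 0])
    then show "x \<in> induced_map J (coset (J \<inter> polyring k) g)"
      using a by (auto simp: induced_map_def)
  qed
qed

theorem lemma3:
  fixes n k :: nat and J :: "cpoly set"
  assumes "Sn_cluster_ideal n J"
    and "1 \<le> k" and "k \<le> n"
  shows "bij_betw (induced_map J)
           (quotient_space (polyring k) (J \<inter> polyring k))
           (invariant_classes n k J)"
proof -
  note cl = assms(1)
  have id: "is_ideal_in (polyring n) J" using cl by (simp add: Sn_cluster_ideal_def)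
  have kn: "polyring k \<subseteq> polyring n" using assms(3) by (rule polyring_mono)
  have Jsub: "J \<subseteq> polyring n" using id by (auto simp: is_ideal_in_def)
  have Jadd: "\<And>a b. a \<in> J \<Longrightarrow> b \<in> J \<Longrightarrow> a + b \<in> J" using J_add[OF id] .
  have Jdiff: "\<And>a b. a \<in> J \<Longrightarrow> b \<in> J \<Longrightarrow> a - b \<in> J" using J_diff[OF id] .
  have Ikadd: "\<And>a b. a \<in> J \<inter> polyring k \<Longrightarrow> b \<in> J \<inter> polyring k \<Longrightarrow> a + b \<in> J \<inter> polyring k"
    using J_add[OF id] polyring_add by blast
  have Ikdiff: "\<And>a b. a \<in> J \<inter> polyring k \<Longrightarrow> b \<in> J \<inter> polyring k \<Longrightarrow> a - b \<in> J \<inter> polyring k"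
    using J_diff[OF id] polyring_diff by blast
  have Ikzero: "0 \<in> J \<inter> polyring k" using J_zero[OF id] polyring_zero by blast
  have sub1n: "{k + 1..n} \<subseteq> {1..n}" by auto
  have inv_cls: "coset J g \<in> invariant_classes n k J" if g: "g \<in> polyring k" for g
  proof -
    have "coset J g \<in> quotient_space (polyring n) J"
      using g kn by (auto simp: quotient_space_def)
    moreover have "pact \<sigma> ` coset J g = coset J g" if p: "\<sigma> permutes {k + 1..n}" for \<sigma>
    proof -
      have p1: "\<sigma> permutes {1..n}" using p sub1n by (rule permutes_subset)
      have bj: "bij \<sigma>" using p by (rule permutes_bij)
      have pg: "pact \<sigma> g = g"
        by (rule polyring_pact_inv[OF p _ g]) auto
      have pi1: "inv \<sigma> permutes {1..n}" using p1 by (rule permutes_inv)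
      have bji: "bij (inv \<sigma>)" using pi1 by (rule permutes_bij)
      show ?thesis
      proof
        show "pact \<sigma> ` coset J g \<subseteq> coset J g"
        proof
          fix x assume "x \<in> pact \<sigma> ` coset J g"
          then obtain a where a: "a \<in> J" "x = pact \<sigma> (g + a)" by (auto simp: coset_def)
          have "x = g + pact \<sigma> a" using a(2) by (simp add: pact_add[OF bj] pg)
          moreover have "pact \<sigma> a \<in> J" by (rule J_pact[OF cl p1 a(1)])
          ultimately show "x \<in> coset J g" by (auto simp: coset_def)
        qed
      next
        show "coset J g \<subseteq> pact \<sigma> ` coset J g"
        proof
          fix x assume "x \<in> coset J g"
          then obtain a where a: "a \<in> J" "x = g + a" by (auto simp: coset_def)
          have ia: "pact (inv \<sigma>) a \<in> J" by (rule J_pact[OF cl pi1 a(1)])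
          have "pact \<sigma> (g + pact (inv \<sigma>) a) = g + pact (\<sigma> \<circ> inv \<sigma>) a"
            by (simp add: pact_add[OF bj] pg pact_comp[OF bj bji])
          also have "\<sigma> \<circ> inv \<sigma> = id" using p by (rule permutes_inv_o)
          finally have "pact \<sigma> (g + pact (inv \<sigma>) a) = x" using a(2) by (simp add: pact_id[unfolded id_def])
          moreover have "g + pact (inv \<sigma>) a \<in> coset J g" using ia by (auto simp: coset_def)
          ultimately show "x \<in> pact \<sigma> ` coset J g" by (metis imageI)
        qed
      qed
    qed
    ultimately show ?thesis by (simp add: invariant_classes_def)
  qed
  show ?thesis
    unfolding bij_betw_def
  proof (intro conjI)
    show "inj_on (induced_map J) (quotient_space (polyring k) (J \<inter> polyring k))"
    proof (rule inj_onI)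
      fix C1 C2 assume c1: "C1 \<in> quotient_space (polyring k) (J \<inter> polyring k)"
        and c2: "C2 \<in> quotient_space (polyring k) (J \<inter> polyring k)"
        and e: "induced_map J C1 = induced_map J C2"
      obtain f1 where f1: "f1 \<in> polyring k" "C1 = coset (J \<inter> polyring k) f1"
        using c1 by (auto simp: quotient_space_def)
      obtain f2 where f2: "f2 \<in> polyring k" "C2 = coset (J \<inter> polyring k) f2"
        using c2 by (auto simp: quotient_space_def)
      have "coset J f1 = coset J f2" using e f1(2) f2(2) by (simp add: induced_coset[OF id])
      then have "f1 - f2 \<in> J" by (rule coset_eqD[OF J_zero[OF id]])
      moreover have "f1 - f2 \<in> polyring k" using f1(1) f2(1) by (rule polyring_diff)
      ultimately have fd: "f1 - f2 \<in> J \<inter> polyring k" by blast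
      have "coset (J \<inter> polyring k) f1 = coset (J \<inter> polyring k) f2"
        by (rule coset_eqI[OF Ikadd Ikdiff fd])
      then show "C1 = C2" using f1(2) f2(2) by simp
    qed
  next
    show "induced_map J ` quotient_space (polyring k) (J \<inter> polyring k) = invariant_classes n k J"
    proof
      show "induced_map J ` quotient_space (polyring k) (J \<inter> polyring k) \<subseteq> invariant_classes n k J"
      proof
        fix D assume "D \<in> induced_map J ` quotient_space (polyring k) (J \<inter> polyring k)"
        then obtain g where g: "g \<in> polyring k" "D = induced_map J (coset (J \<inter> polyring k) g)"
          by (auto simp: quotient_space_def)
        then have "D = coset J g" by (simp add: induced_coset[OF id])
        then show "D \<in> invariant_classes n k J" using inv_cls[OF g(1)] by simp
      qed
    next
      show "invariant_classes n k J \<subseteq> induced_map J ` quotient_space (polyring k) (J \<inter> polyring k)"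
      proof
        fix C assume C: "C \<in> invariant_classes n k J"
        then obtain f where f: "f \<in> polyring n" "C = coset J f"
          by (auto simp: invariant_classes_def quotient_space_def)
        have Cinv: "\<And>\<sigma>. \<sigma> permutes {k + 1..n} \<Longrightarrow> pact \<sigma> ` C = C"
          using C by (simp add: invariant_classes_def)
        have finv: "\<forall>\<sigma>. \<sigma> permutes {n - (n - k) + 1..n} \<longrightarrow> pact \<sigma> f - f \<in> J"
        proof (intro allI impI)
          fix \<sigma> assume "\<sigma> permutes {n - (n - k) + 1..n}"
          then have p: "\<sigma> permutes {k + 1..n}" using assms(3) by simp
          have "f \<in> C" using f(2) J_zero[OF id] by (auto simp: coset_def intro!: exI[of _ 0])
          then have "pact \<sigma> f \<in> C" using Cinv[OF p] by blast
          then obtain a where "a \<in> J" "pact \<sigma> f = f + a" using f(2) by (auto simp: coset_def)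
          then show "pact \<sigma> f - f \<in> J" by simp
        qed
        have "\<exists>g\<in>polyring (n - (n - k)). f - g \<in> J"
          using down[OF cl, of "n - k"] f(1) finv by auto
        then obtain g where g: "g \<in> polyring k" "f - g \<in> J" using assms(3) by auto
        have "C = coset J g" using f(2) coset_eqI[OF Jadd Jdiff g(2)] by simp
        also have "\<dots> = induced_map J (coset (J \<inter> polyring k) g)" by (simp add: induced_coset[OF id])
        finally show "C \<in> induced_map J ` quotient_space (polyring k) (J \<inter> polyring k)"
          using g(1) by (auto simp: quotient_space_def)
      qed
    qed
  qed
qed

end
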